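(* Let $k\ge1$ and let $\sigma=\sigma_1\sigma_2\cdots\sigma_k\in\mathfrak S_k$ be a consecutive pattern. Let $1\text{-}\sigma$ denote the generalized pattern $1\text{-}(\sigma_1+1)(\sigma_2+1)\cdots(\sigma_k+1)$ of length $k+1$. Then, as formal power series, $$A_{1\text{-}\sigma}(z)=\exp\left(\int_0^z A_\sigma(t)\,dt\right).$$
   Context: $\mathfrak S_n$ is the symmetric group on $\{1,\dots,n\}$, permutations written in one-line notation $\pi=\pi_1\cdots\pi_n$. A generalized pattern of length $m$ is a permutation $\sigma_1\cdots\sigma_m\in\mathfrak S_m$ together with, for each $j=1,\dots,m-1$, a choice of either inserting a dash "-" between $\sigma_j$ and $\sigma_{j+1}$ or not; write it $\sigma_1\varepsilon_1\sigma_2\cdots\varepsilon_{m-1}\sigma_m$ with each $\varepsilon_j$ either "-" or empty. A permutation $\pi\in\mathfrak S_n$ contains this pattern if there are indices $i_1<\dots<i_m$ such that (i) whenever $\varepsilon_j$ is empty, $i_{j+1}=i_j+1$, and (ii) for all $a,b$, $\pi_{i_a}<\pi_{i_b}$ iff $\sigma_a<\sigma_b$. Otherwise $\pi$ avoids it. A consecutive pattern is one with no dashes (an occurrence must occupy adjacent positions). For a generalized pattern $\sigma$, $\alpha_n(\sigma)$ is the number of permutations in $\mathfrak S_n$ avoiding $\sigma$ (with $\alpha_0(\sigma)=1$ for the empty permutation), and $A_\sigma(z)=\sum_{n\ge0}\alpha_n(\sigma)z^n/n!$ is its exponential generating function. *)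

theory Defs
  imports "HOL-Computational_Algebra.Formal_Power_Series" "HOL-Combinatorics.Multiset_Permutations"
begin

text \<open>A generalized pattern of length m is a pair (sigma, eps): sigma is a list
  (one-line notation of a permutation of {1..m}) and eps is a list of length m-1,
  where eps!j = True means a dash between sigma_(j+1) and sigma_(j+2) (0-based j),
  and False means no dash (adjacency required).\<close>

type_synonym gpattern = "nat list \<times> bool list"

definition occurrence :: "gpattern \<Rightarrow> nat list \<Rightarrow> (nat \<Rightarrow> nat) \<Rightarrow> bool" where
  "occurrence p \<pi> \<iota> \<longleftrightarrow>
     (let \<sigma> = fst p; \<epsilon> = snd p; m = length \<sigma> in
       (\<forall>a b. a < b \<longrightarrow> b < m \<longrightarrow> \<iota> a < \<iota> b) \<and>
       (\<forall>a < m. \<iota> a < length \<pi>) \<and>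
       (\<forall>j. j + 1 < m \<longrightarrow> \<not> (\<epsilon> ! j) \<longrightarrow> \<iota> (j + 1) = \<iota> j + 1) \<and>
       (\<forall>a < m. \<forall>b < m. (\<pi> ! \<iota> a < \<pi> ! \<iota> b) \<longleftrightarrow> (\<sigma> ! a < \<sigma> ! b)))"

definition contains :: "nat list \<Rightarrow> gpattern \<Rightarrow> bool" where
  "contains \<pi> p \<longleftrightarrow> (\<exists>\<iota>. occurrence p \<pi> \<iota>)"

definition alpha :: "gpattern \<Rightarrow> nat \<Rightarrow> nat" where
  "alpha p n = card {\<pi> \<in> permutations_of_set {1..n}. \<not> contains \<pi> p}"

definition avoid_egf :: "gpattern \<Rightarrow> rat fps" where
  "avoid_egf p = Abs_fps (\<lambda>n. of_nat (alpha p n) / of_nat (fact n))"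

end

theory Submission
  imports Defs
begin

unbundle fps_syntax

definition cocc :: "nat list \<Rightarrow> nat list \<Rightarrow> nat \<Rightarrow> bool" where
  "cocc \<sigma> \<pi> j \<longleftrightarrow> j + length \<sigma> \<le> length \<pi> \<and>
     (\<forall>a<length \<sigma>. \<forall>b<length \<sigma>. (\<pi>!(j+a) < \<pi>!(j+b)) = (\<sigma>!a < \<sigma>!b))"

lemma occurrence_iff: "occurrence (\<sigma>, \<epsilon>) \<pi> \<iota> \<longleftrightarrow>
   (\<forall>a b. a < b \<longrightarrow> b < length \<sigma> \<longrightarrow> \<iota> a < \<iota> b) \<and>
   (\<forall>a < length \<sigma>. \<iota> a < length \<pi>) \<and>
   (\<forall>j. j + 1 < length \<sigma> \<longrightarrow> \<not> (\<epsilon> ! j) \<longrightarrow> \<iota> (j + 1) = \<iota> j + 1) \<and>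
   (\<forall>a < length \<sigma>. \<forall>b < length \<sigma>. (\<pi> ! \<iota> a < \<pi> ! \<iota> b) \<longleftrightarrow> (\<sigma> ! a < \<sigma> ! b))"
  by (simp only: occurrence_def Let_def fst_conv snd_conv)

lemma contains_S:
  assumes "length \<sigma> = k" "k \<ge> 1"
  shows "contains \<pi> (\<sigma>, replicate (k-1) False) \<longleftrightarrow> (\<exists>j. cocc \<sigma> \<pi> j)"
proof
  assume "contains \<pi> (\<sigma>, replicate (k-1) False)"
  then obtain \<iota> where occ: "occurrence (\<sigma>, replicate (k-1) False) \<pi> \<iota>"
    unfolding contains_def by blast
  note O = occ[unfolded occurrence_iff]
  have adj: "j + 1 < k \<Longrightarrow> \<iota> (j+1) = \<iota> j + 1" for j
    using O assms by simp
  have idx: "a < k \<Longrightarrow> \<iota> a = \<iota> 0 + a" for a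
    by (induction a) (auto simp: adj[simplified])
  have bnd: "\<iota> (k-1) < length \<pi>" using O assms by simp
  have ord: "a < k \<Longrightarrow> b < k \<Longrightarrow> (\<pi> ! \<iota> a < \<pi> ! \<iota> b) = (\<sigma>!a < \<sigma>!b)" for a b
    using O assms by simp
  have "cocc \<sigma> \<pi> (\<iota> 0)"
    unfolding cocc_def
  proof (intro conjI allI impI)
    show "\<iota> 0 + length \<sigma> \<le> length \<pi>" using assms bnd idx[of "k-1"] by simp
    fix a b assume "a < length \<sigma>" "b < length \<sigma>"
    then show "(\<pi> ! (\<iota> 0 + a) < \<pi> ! (\<iota> 0 + b)) = (\<sigma> ! a < \<sigma> ! b)"
      using ord[of a b] idx[of a] idx[of b] assms by simp
  qed
  then show "\<exists>j. cocc \<sigma> \<pi> j" by blast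
next
  assume "\<exists>j. cocc \<sigma> \<pi> j"
  then obtain j where c: "cocc \<sigma> \<pi> j" by blast
  have "occurrence (\<sigma>, replicate (k-1) False) \<pi> (\<lambda>a. j + a)"
    unfolding occurrence_iff
  proof (intro conjI allI impI)
    fix a assume "a < length \<sigma>" then show "j + a < length \<pi>" using c unfolding cocc_def by simp
  next
    fix a b assume "a < length \<sigma>" "b < length \<sigma>"
    then show "(\<pi> ! (j + a) < \<pi> ! (j + b)) = (\<sigma> ! a < \<sigma> ! b)" using c unfolding cocc_def by simp
  qed simp_all
  then show "contains \<pi> (\<sigma>, replicate (k-1) False)" unfolding contains_def by blast
qed

lemma contains_P:
  assumes "length \<sigma> = k" "k \<ge> 1" "\<forall>x\<in>set \<sigma>. x \<ge> 1"
  shows "contains \<pi> (1 # map Suc \<sigma>, True # replicate (k-1) False) \<longleftrightarrow>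
    (\<exists>i j. i < j \<and> cocc \<sigma> \<pi> j \<and> (\<forall>b<k. \<pi>!i < \<pi>!(j+b)))"
proof
  assume "contains \<pi> (1 # map Suc \<sigma>, True # replicate (k-1) False)"
  then obtain \<iota> where occ: "occurrence (1 # map Suc \<sigma>, True # replicate (k-1) False) \<pi> \<iota>"
    unfolding contains_def by blast
  note O = occ[unfolded occurrence_iff]
  have adj: "j + 1 < k \<Longrightarrow> \<iota> (Suc j+1) = \<iota> (Suc j) + 1" for j
  proof -
    assume j: "j + 1 < k"
    have "Suc j + 1 < length (1 # map Suc \<sigma>)" using j assms by simp
    moreover have "\<not> (True # replicate (k-1) False) ! Suc j" using j by simp
    ultimately show ?thesis using O by blast
  qed
  have idx: "a < k \<Longrightarrow> \<iota> (Suc a) = \<iota> 1 + a" for a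
    by (induction a) (auto simp: adj[simplified])
  have mono: "\<iota> 0 < \<iota> 1" using O assms by simp
  have bnd: "\<iota> k < length \<pi>" using O assms by simp
  have ord: "a < Suc k \<Longrightarrow> b < Suc k \<Longrightarrow> (\<pi> ! \<iota> a < \<pi> ! \<iota> b) = ((1 # map Suc \<sigma>)!a < (1 # map Suc \<sigma>)!b)" for a b
  proof -
    assume "a < Suc k" "b < Suc k"
    then have "a < length (1 # map Suc \<sigma>)" "b < length (1 # map Suc \<sigma>)" using assms by simp_all
    then show ?thesis using O by blast
  qed
  have c: "cocc \<sigma> \<pi> (\<iota> 1)"
    unfolding cocc_def
  proof (intro conjI allI impI)
    show "\<iota> 1 + length \<sigma> \<le> length \<pi>" using bnd idx[of "k-1"] assms by simp
    fix a b assume "a < length \<sigma>" "b < length \<sigma>"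
    then show "(\<pi> ! (\<iota> 1 + a) < \<pi> ! (\<iota> 1 + b)) = (\<sigma> ! a < \<sigma> ! b)"
      using ord[of "Suc a" "Suc b"] idx[of a] idx[of b] assms by simp
  qed
  have "\<forall>b<k. \<pi>!(\<iota> 0) < \<pi>!(\<iota> 1 + b)"
  proof (intro allI impI)
    fix b assume b: "b < k"
    have "\<sigma>!b \<ge> 1" using assms b by simp
    then show "\<pi>!(\<iota> 0) < \<pi>!(\<iota> 1 + b)" using ord[of 0 "Suc b"] idx[of b] b assms by simp
  qed
  then show "\<exists>i j. i < j \<and> cocc \<sigma> \<pi> j \<and> (\<forall>b<k. \<pi>!i < \<pi>!(j+b))"
    using mono c by blast
next
  assume "\<exists>i j. i < j \<and> cocc \<sigma> \<pi> j \<and> (\<forall>b<k. \<pi>!i < \<pi>!(j+b))"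
  then obtain i j where ij: "i < j" "cocc \<sigma> \<pi> j" "\<forall>b<k. \<pi>!i < \<pi>!(j+b)" by blast
  define \<iota> where "\<iota> = (\<lambda>a. if a = 0 then i else j + (a - 1))"
  have "occurrence (1 # map Suc \<sigma>, True # replicate (k-1) False) \<pi> \<iota>"
    unfolding occurrence_iff
  proof (intro conjI allI impI)
    fix a b :: nat assume "a < b" "b < length (1 # map Suc \<sigma>)"
    then show "\<iota> a < \<iota> b" using ij(1) unfolding \<iota>_def by auto
  next
    fix a assume "a < length (1 # map Suc \<sigma>)"
    then show "\<iota> a < length \<pi>" using ij assms unfolding \<iota>_def cocc_def by auto
  next
    fix a assume "a + 1 < length (1 # map Suc \<sigma>)" "\<not> (True # replicate (k - 1) False) ! a"
    then show "\<iota> (a + 1) = \<iota> a + 1" unfolding \<iota>_def by (cases a) simp_all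
  next
    fix a b assume a: "a < length (1 # map Suc \<sigma>)" and b: "b < length (1 # map Suc \<sigma>)"
    show "(\<pi> ! \<iota> a < \<pi> ! \<iota> b) = ((1 # map Suc \<sigma>) ! a < (1 # map Suc \<sigma>) ! b)"
    proof (cases a)
      case 0
      then show ?thesis
      proof (cases b)
        case 0 then show ?thesis using \<open>a = 0\<close> by simp
      next
        case (Suc b')
        have "\<sigma>!b' \<ge> 1" using assms b Suc by simp
        moreover have "\<pi>!i < \<pi>!(j+b')" using ij(3) b Suc assms by simp
        moreover have "b' < length \<sigma>" using b Suc by simp
        ultimately show ?thesis using \<open>a = 0\<close> Suc unfolding \<iota>_def by simp
      qed
    next
      case (Suc a')
      then show ?thesis
      proof (cases b)
        case 0
        have "\<sigma>!a' \<ge> 1" using assms a Suc by simp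
        moreover have "\<pi>!i < \<pi>!(j+a')" using ij(3) a Suc assms by simp
        moreover have "a' < length \<sigma>" using a Suc by simp
        ultimately show ?thesis using \<open>b = 0\<close> Suc unfolding \<iota>_def by simp
      next
        case (Suc b')
        then show ?thesis using \<open>a = Suc a'\<close> ij(2) a b unfolding \<iota>_def cocc_def by simp
      qed
    qed
  qed
  then show "contains \<pi> (1 # map Suc \<sigma>, True # replicate (k-1) False)"
    unfolding contains_def by blast
qed


lemma contains_map:
  assumes "\<And>x y. x \<in> set \<pi> \<Longrightarrow> y \<in> set \<pi> \<Longrightarrow> (f x < f y) = (x < y)"
  shows "contains (map f \<pi>) p \<longleftrightarrow> contains \<pi> p"
proof -
  obtain \<sigma> \<epsilon> where p: "p = (\<sigma>, \<epsilon>)" by fastforce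
  have "occurrence (\<sigma>, \<epsilon>) (map f \<pi>) \<iota> \<longleftrightarrow> occurrence (\<sigma>, \<epsilon>) \<pi> \<iota>" for \<iota>
  proof -
    have "(\<forall>a<length \<sigma>. \<iota> a < length \<pi>) \<Longrightarrow>
      (\<forall>a < length \<sigma>. \<forall>b < length \<sigma>. (map f \<pi> ! \<iota> a < map f \<pi> ! \<iota> b) \<longleftrightarrow> (\<sigma> ! a < \<sigma> ! b))
      \<longleftrightarrow> (\<forall>a < length \<sigma>. \<forall>b < length \<sigma>. (\<pi> ! \<iota> a < \<pi> ! \<iota> b) \<longleftrightarrow> (\<sigma> ! a < \<sigma> ! b))"
      using assms by (simp add: nth_mem)
    then show ?thesis unfolding occurrence_iff by auto
  qed
  then have "occurrence (\<sigma>, \<epsilon>) (map f \<pi>) = occurrence (\<sigma>, \<epsilon>) \<pi>" by (intro ext)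
  then show ?thesis unfolding contains_def p by simp
qed

lemma card_avoid_relabel:
  assumes "finite A"
  shows "card {\<pi> \<in> permutations_of_set A. \<not> contains \<pi> p} = alpha p (card A)"
proof -
  define n where "n = card A"
  define xs where "xs = sorted_list_of_set A"
  define f where "f = (\<lambda>i. xs ! (i - 1))"
  have len: "length xs = n" unfolding xs_def n_def by simp
  have setxs: "set xs = A" unfolding xs_def using assms by simp
  have sw: "sorted_wrt (<) xs" unfolding xs_def using strict_sorted_list_of_set[of A] by simp
  have mono: "x \<in> {1..n} \<Longrightarrow> y \<in> {1..n} \<Longrightarrow> x < y \<Longrightarrow> f x < f y" for x y
    unfolding f_def using sorted_wrt_nth_less[OF sw, of "x-1" "y-1"] len by auto
  have ord: "x \<in> {1..n} \<Longrightarrow> y \<in> {1..n} \<Longrightarrow> (f x < f y) = (x < y)" for x y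
    using mono[of x y] mono[of y x] by (metis less_asym linorder_neqE_nat)
  have inj: "inj_on f {1..n}"
    by (rule inj_onI) (metis ord less_irrefl linorder_neqE_nat)
  have img: "f ` {1..n} = A"
  proof -
    have "f ` {1..n} = (\<lambda>i. xs ! i) ` {0..<n}"
    proof
      show "f ` {1..n} \<subseteq> (\<lambda>i. xs ! i) ` {0..<n}"
      proof
        fix y assume "y \<in> f ` {1..n}"
        then obtain i where i: "i \<in> {1..n}" "y = xs ! (i - 1)" unfolding f_def by blast
        then have "i - 1 \<in> {0..<n}" by auto
        then show "y \<in> (\<lambda>i. xs ! i) ` {0..<n}" using i by blast
      qed
    next
      show "(\<lambda>i. xs ! i) ` {0..<n} \<subseteq> f ` {1..n}"
      proof
        fix y assume "y \<in> (\<lambda>i. xs ! i) ` {0..<n}"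
        then obtain i where i: "i \<in> {0..<n}" "y = xs ! i" by blast
        then have "Suc i \<in> {1..n}" "y = f (Suc i)" unfolding f_def by auto
        then show "y \<in> f ` {1..n}" by blast
      qed
    qed
    also have "\<dots> = set xs" using len by (auto simp: set_conv_nth)
    finally show ?thesis using setxs by simp
  qed
  have P: "permutations_of_set A = map f ` permutations_of_set {1..n}"
    using permutations_of_set_image_inj[OF inj] img by simp
  have "{\<pi> \<in> permutations_of_set A. \<not> contains \<pi> p} = map f ` {\<pi> \<in> permutations_of_set {1..n}. \<not> contains \<pi> p}"
  proof -
    have "contains (map f \<pi>) p \<longleftrightarrow> contains \<pi> p" if "\<pi> \<in> permutations_of_set {1..n}" for \<pi>
      using that by (intro contains_map ord) (auto dest: permutations_of_setD)
    then show ?thesis unfolding P by auto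
  qed
  also have "card \<dots> = card {\<pi> \<in> permutations_of_set {1..n}. \<not> contains \<pi> p}"
  proof (rule card_image, rule inj_onI)
    fix x y assume "x \<in> {\<pi> \<in> permutations_of_set {1..n}. \<not> contains \<pi> p}"
      "y \<in> {\<pi> \<in> permutations_of_set {1..n}. \<not> contains \<pi> p}" "map f x = map f y"
    then have "set x = {1..n}" "set y = {1..n}" by (auto dest: permutations_of_setD)
    then show "x = y" using inj_on_map_eq_map[of f x y] inj \<open>map f x = map f y\<close> by simp
  qed
  finally show ?thesis unfolding alpha_def n_def .
qed


lemma cocc_transfer:
  assumes "j + length \<sigma> \<le> length \<pi>" "j' + length \<sigma> \<le> length \<tau>"
    "\<And>x. x < length \<sigma> \<Longrightarrow> \<pi>!(j+x) = \<tau>!(j'+x)"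
  shows "cocc \<sigma> \<pi> j \<longleftrightarrow> cocc \<sigma> \<tau> j'"
  unfolding cocc_def using assms by simp

lemma split_avoid:
  assumes "length \<sigma> = k" "k \<ge> 1" "\<forall>x\<in>set \<sigma>. x \<ge> 1"
    and mless: "\<forall>x \<in> set L \<union> set R. m < x"
  shows "contains (L @ m # R) (1 # map Suc \<sigma>, True # replicate (k-1) False) \<longleftrightarrow>
    contains L (1 # map Suc \<sigma>, True # replicate (k-1) False) \<or> contains R (\<sigma>, replicate (k-1) False)"
    (is "contains ?\<pi> ?P \<longleftrightarrow> contains L ?P \<or> contains R ?S")
proof -
  define p where "p = length L"
  have nL: "x < p \<Longrightarrow> ?\<pi> ! x = L ! x" for x unfolding p_def by (simp add: nth_append)
  have nm: "?\<pi> ! p = m" unfolding p_def by simp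
  have nR: "?\<pi> ! (p + 1 + x) = R ! x" for x unfolding p_def by (simp add: nth_append)
  have lenpi: "length ?\<pi> = p + 1 + length R" unfolding p_def by simp
  show ?thesis
  proof
    assume "contains ?\<pi> ?P"
    then obtain i j where ij: "i < j" "cocc \<sigma> ?\<pi> j" "\<forall>b<k. ?\<pi>!i < ?\<pi>!(j+b)"
      using contains_P[OF assms(1-3)] by blast
    have jk: "j + k \<le> length ?\<pi>" using ij(2) assms(1) unfolding cocc_def by simp
    consider "j + k \<le> p" | "j \<le> p" "p < j + k" | "p < j" by linarith
    then show "contains L ?P \<or> contains R ?S"
    proof cases
      case 1
      have "cocc \<sigma> L j"
        using cocc_transfer[of j \<sigma> L j ?\<pi>] ij(2) 1 assms(1) nL unfolding p_def by simp
      moreover have "\<forall>b<k. L!i < L!(j+b)" using ij(3) 1 ij(1) nL by simp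
      ultimately have "contains L ?P" using contains_P[OF assms(1-3)] ij(1) by blast
      then show ?thesis by blast
    next
      case 2
      have "?\<pi>!i < m" using ij(3)[rule_format, of "p - j"] 2 nm by simp
      moreover have "?\<pi>!i = L!i" "i < length L" using nL 2 ij(1) unfolding p_def by auto
      moreover have "L!i \<in> set L" using \<open>i < length L\<close> by (rule nth_mem)
      moreover have "m < L!i" using mless \<open>L!i \<in> set L\<close> by blast
      ultimately have False by linarith
      then show ?thesis by blast
    next
      case 3
      have "cocc \<sigma> R (j - p - 1)"
        using cocc_transfer[of "j - p - 1" \<sigma> R j ?\<pi>] ij(2) 3 assms(1) nR[of "j - p - 1 + _"] jk lenpi
        by (simp add: add.assoc)
      then show ?thesis using contains_S[OF assms(1,2)] by blast
    qed
  next
    assume "contains L ?P \<or> contains R ?S"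
    then show "contains ?\<pi> ?P"
    proof
      assume "contains L ?P"
      then obtain i j where ij: "i < j" "cocc \<sigma> L j" "\<forall>b<k. L!i < L!(j+b)"
        using contains_P[OF assms(1-3)] by blast
      have jk: "j + k \<le> p" using ij(2) assms(1) unfolding cocc_def p_def by simp
      have "cocc \<sigma> ?\<pi> j"
        using cocc_transfer[of j \<sigma> L j ?\<pi>] ij(2) jk assms(1) nL unfolding p_def by simp
      moreover have "\<forall>b<k. ?\<pi>!i < ?\<pi>!(j+b)" using ij(3) jk ij(1) nL by simp
      ultimately show ?thesis using contains_P[OF assms(1-3)] ij(1) by blast
    next
      assume "contains R ?S"
      then obtain j where j: "cocc \<sigma> R j" using contains_S[OF assms(1,2)] by blast
      have jk: "j + k \<le> length R" using j assms(1) unfolding cocc_def by simp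
      have "cocc \<sigma> ?\<pi> (p + 1 + j)"
        using cocc_transfer[of "j" \<sigma> R "p + 1 + j" ?\<pi>] j jk assms(1) nR lenpi
        by (simp add: add.assoc)
      moreover have "\<forall>b<k. ?\<pi>!p < ?\<pi>!(p + 1 + j + b)"
      proof (intro allI impI)
        fix b assume "b < k"
        then have "R!(j+b) \<in> set R" using jk by simp
        then show "?\<pi>!p < ?\<pi>!(p + 1 + j + b)" using nm nR[of "j+b"] mless by (simp add: add.assoc)
      qed
      ultimately have "\<exists>i j. i < j \<and> cocc \<sigma> ?\<pi> j \<and> (\<forall>b<k. ?\<pi>!i < ?\<pi>!(j+b))"
        by (intro exI[of _ p] exI[of _ "p+1+j"]) simp
      then show ?thesis using contains_P[OF assms(1-3), of ?\<pi>] by blast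
    qed
  qed
qed


definition avP :: "gpattern \<Rightarrow> nat set \<Rightarrow> nat list set" where
  "avP p A = {\<pi> \<in> permutations_of_set A. \<not> contains \<pi> p}"

lemma card_split:
  assumes "length \<sigma> = k" "k \<ge> 1" "\<forall>x\<in>set \<sigma>. x \<ge> 1"
    and fin: "finite A" and ne: "A \<noteq> {}"
  defines "m \<equiv> Min A"
  defines "A' \<equiv> A - {m}"
  shows "card (avP (1 # map Suc \<sigma>, True # replicate (k-1) False) A) =
    (\<Sum>X\<in>Pow A'. card (avP (1 # map Suc \<sigma>, True # replicate (k-1) False) X) *
       card (avP (\<sigma>, replicate (k-1) False) (A' - X)))"
proof -
  let ?P = "(1 # map Suc \<sigma>, True # replicate (k-1) False)"
  let ?S = "(\<sigma>, replicate (k-1) False)"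
  define h where "h = (\<lambda>(X::nat set, L::nat list, R::nat list). L @ m # R)"
  define D where "D = Sigma (Pow A') (\<lambda>X. avP ?P X \<times> avP ?S (A' - X))"
  have mA: "m \<in> A" unfolding m_def using fin ne by simp
  have mless: "x \<in> A' \<Longrightarrow> m < x" for x
    unfolding A'_def m_def using fin ne by (simp add: order.not_eq_order_implies_strict)
  have mA': "m \<notin> A'" unfolding A'_def by simp
  have bij: "bij_betw h D (avP ?P A)"
    unfolding bij_betw_def
  proof (intro conjI)
    show "inj_on h D"
    proof (rule inj_onI)
      fix u v assume u: "u \<in> D" and v: "v \<in> D" and huv: "h u = h v"
      obtain X1 L1 R1 where u': "u = (X1, L1, R1)" by (cases u) auto
      obtain X2 L2 R2 where v': "v = (X2, L2, R2)" by (cases v) auto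
      have s: "set L1 = X1" "set L2 = X2" "set R1 = A' - X1" "set R2 = A' - X2" "X1 \<subseteq> A'" "X2 \<subseteq> A'"
        using u v unfolding u' v' D_def avP_def by (auto dest: permutations_of_setD)
      have "m \<notin> set L1" "m \<notin> set R1" using s mA' by auto
      then have "L1 = L2 \<and> R1 = R2" using append_Cons_eq_iff[of m L1 R1 L2 R2] huv
        unfolding u' v' h_def by simp
      then show "u = v" using s unfolding u' v' by simp
    qed
  next
    show "h ` D = avP ?P A"
    proof
      show "h ` D \<subseteq> avP ?P A"
      proof
        fix y assume "y \<in> h ` D"
        then obtain X L R where XLR: "(X, L, R) \<in> D" "y = L @ m # R" unfolding h_def by auto
        have s: "set L = X" "set R = A' - X" "X \<subseteq> A'" "distinct L" "distinct R"
          "\<not> contains L ?P" "\<not> contains R ?S"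
          using XLR unfolding D_def avP_def by (auto dest: permutations_of_setD)
        have ml: "\<forall>x \<in> set L \<union> set R. m < x" using s mless by auto
        have "set y = A" using s mA unfolding XLR(2) A'_def by auto
        moreover have "distinct y" using s mA' unfolding XLR(2) by auto
        moreover have "\<not> contains y ?P"
          using split_avoid[OF assms(1-3) ml] s unfolding XLR(2) by blast
        ultimately show "y \<in> avP ?P A" unfolding avP_def by blast
      qed
    next
      show "avP ?P A \<subseteq> h ` D"
      proof
        fix y assume y: "y \<in> avP ?P A"
        then have sy: "set y = A" "distinct y" "\<not> contains y ?P"
          unfolding avP_def by (auto dest: permutations_of_setD)
        then obtain L R where LR: "y = L @ m # R" using mA split_list by metis
        have d: "distinct L" "distinct R" "m \<notin> set L" "m \<notin> set R" "set L \<inter> set R = {}"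
          using sy(2) unfolding LR by auto
        have sL: "set L \<subseteq> A'" "set R = A' - set L"
          using sy(1) d unfolding LR A'_def by auto
        have ml: "\<forall>x \<in> set L \<union> set R. m < x" using sL mless by auto
        have "\<not> contains L ?P" "\<not> contains R ?S"
          using split_avoid[OF assms(1-3) ml] sy(3) unfolding LR by auto
        then have "(set L, L, R) \<in> D" unfolding D_def avP_def using sL d by auto
        then show "y \<in> h ` D" unfolding h_def LR by force
      qed
    qed
  qed
  have "card (avP ?P A) = card D" using bij_betw_same_card[OF bij] by simp
  also have "\<dots> = (\<Sum>X\<in>Pow A'. card (avP ?P X \<times> avP ?S (A' - X)))"
    unfolding D_def using fin unfolding A'_def
    by (intro card_SigmaI) (auto simp: avP_def)
  also have "\<dots> = (\<Sum>X\<in>Pow A'. card (avP ?P X) * card (avP ?S (A' - X)))"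
    by (simp add: card_cartesian_product)
  finally show ?thesis .
qed


lemma sum_pow_card:
  assumes "finite B"
  shows "(\<Sum>X\<in>Pow B. g (card X)) = (\<Sum>j\<le>card B. of_nat (card B choose j) * g j)"
proof -
  have "(\<Sum>X\<in>Pow B. g (card X)) = (\<Sum>j\<le>card B. \<Sum>X\<in>{X. X \<in> Pow B \<and> card X = j}. g (card X))"
    using assms by (intro sum.group[symmetric]) (auto intro: card_mono)
  also have "\<dots> = (\<Sum>j\<le>card B. of_nat (card B choose j) * g j)"
  proof (rule sum.cong[OF refl])
    fix j
    have "(\<Sum>X\<in>{X. X \<in> Pow B \<and> card X = j}. g (card X)) = (\<Sum>X\<in>{X. X \<subseteq> B \<and> card X = j}. g j)"
      by (rule sum.cong) auto
    also have "\<dots> = of_nat (card B choose j) * g j" using n_subsets[OF assms, of j] by simp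
    finally show "(\<Sum>X\<in>{X. X \<in> Pow B \<and> card X = j}. g (card X)) = of_nat (card B choose j) * g j" .
  qed
  finally show ?thesis .
qed

lemma alpha_rec:
  assumes "length \<sigma> = k" "k \<ge> 1" "\<forall>x\<in>set \<sigma>. x \<ge> 1"
  shows "alpha (1 # map Suc \<sigma>, True # replicate (k-1) False) (Suc n) =
    (\<Sum>j\<le>n. (n choose j) * (alpha (1 # map Suc \<sigma>, True # replicate (k-1) False) j *
       alpha (\<sigma>, replicate (k-1) False) (n - j)))"
proof -
  let ?P = "(1 # map Suc \<sigma>, True # replicate (k-1) False)"
  let ?S = "(\<sigma>, replicate (k-1) False)"
  define A where "A = {1..Suc n}"
  have mn: "Min A = 1" unfolding A_def by (rule Min_eqI) auto
  have A': "A - {Min A} = {2..Suc n}" by (simp add: mn) (auto simp: A_def)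
  have cA': "card {2..Suc n} = n" by simp
  have "alpha ?P (Suc n) = card (avP ?P A)"
    unfolding avP_def A_def using card_avoid_relabel[of "{1..Suc n}" ?P] by simp
  also have "\<dots> = (\<Sum>X\<in>Pow {2..Suc n}. card (avP ?P X) * card (avP ?S ({2..Suc n} - X)))"
    using card_split[OF assms, of A] unfolding A' by (simp add: A_def)
  also have "\<dots> = (\<Sum>X\<in>Pow {2..Suc n}. alpha ?P (card X) * alpha ?S (n - card X))"
  proof (rule sum.cong[OF refl])
    fix X assume X: "X \<in> Pow {2..Suc n}"
    then have fX: "finite X" by (auto intro: finite_subset)
    have "card ({2..Suc n} - X) = n - card X" using X fX by (simp add: card_Diff_subset)
    then show "card (avP ?P X) * card (avP ?S ({2..Suc n} - X)) = alpha ?P (card X) * alpha ?S (n - card X)"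
      unfolding avP_def using card_avoid_relabel fX by simp
  qed
  also have "\<dots> = (\<Sum>j\<le>n. of_nat (n choose j) * (alpha ?P j * alpha ?S (n - j)))"
    using sum_pow_card[of "{2..Suc n}" "\<lambda>j. alpha ?P j * alpha ?S (n - j)"] by simp
  finally show ?thesis by simp
qed


lemma fps_ode_unique:
  fixes F E B :: "'a::field_char_0 fps"
  assumes "fps_deriv F = F * B" "fps_deriv E = E * B" "F $ 0 = E $ 0"
  shows "F = E"
proof -
  have "\<forall>m\<le>n. F $ m = E $ m" for n
  proof (induction n)
    case 0 then show ?case using assms(3) by simp
  next
    case (Suc n)
    have "(F * B) $ n = (E * B) $ n"
      unfolding fps_mult_nth using Suc.IH by (intro sum.cong) auto
    then have "fps_deriv F $ n = fps_deriv E $ n" using assms(1,2) by simp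
    then have "of_nat (Suc n) * F $ Suc n = of_nat (Suc n) * E $ Suc n"
      by (simp add: fps_deriv_nth add.commute)
    then have "F $ Suc n = E $ Suc n"
      by (metis mult_cancel_left of_nat_eq_0_iff nat.distinct(1))
    then show ?case using Suc.IH le_Suc_eq by auto
  qed
  then show ?thesis by (intro fps_ext) blast
qed

lemma exp_comp_ode:
  fixes B :: "'a::field_char_0 fps"
  shows "fps_deriv (fps_exp 1 oo fps_integral B 0) = (fps_exp 1 oo fps_integral B 0) * B"
    "(fps_exp 1 oo fps_integral B 0) $ 0 = 1"
proof -
  have "fps_integral B 0 $ 0 = 0" by (simp add: fps_integral_def)
  then show "fps_deriv (fps_exp 1 oo fps_integral B 0) = (fps_exp 1 oo fps_integral B 0) * B"
    by (simp add: fps_compose_deriv fps_deriv_fps_integral)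
  show "(fps_exp 1 oo fps_integral B 0) $ 0 = 1" by simp
qed

theorem mainTheorem1:
  fixes k :: nat and \<sigma> :: "nat list"
  assumes "k \<ge> 1" and "\<sigma> \<in> permutations_of_set {1..k}"
  shows "avoid_egf (1 # map Suc \<sigma>, True # replicate (k - 1) False)
         = fps_exp 1 oo fps_integral (avoid_egf (\<sigma>, replicate (k - 1) False)) 0"
proof -
  let ?P = "(1 # map Suc \<sigma>, True # replicate (k-1) False)"
  let ?S = "(\<sigma>, replicate (k-1) False)"
  have len: "length \<sigma> = k" using length_finite_permutations_of_set[OF assms(2)] by simp
  have ge1: "\<forall>x\<in>set \<sigma>. x \<ge> 1" using permutations_of_setD(1)[OF assms(2)] by auto
  note rec = alpha_rec[OF len assms(1) ge1]
  have a0: "alpha ?P 0 = 1"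
  proof -
    have "\<not> contains [] ?P" using contains_P[OF len assms(1) ge1, of "[]"] len assms(1)
      unfolding cocc_def by auto
    then have "{\<pi> \<in> permutations_of_set {1..0}. \<not> contains \<pi> ?P} = {[]}" by auto
    then show ?thesis unfolding alpha_def by simp
  qed
  define F where "F = avoid_egf ?P"
  define B where "B = avoid_egf ?S"
  have "fps_deriv F = F * B"
  proof (rule fps_ext)
    fix n
    have "fps_deriv F $ n = of_nat (Suc n) * (of_nat (alpha ?P (Suc n)) / fact (Suc n))"
      unfolding F_def avoid_egf_def fps_deriv_nth by (simp add: add.commute)
    also have "\<dots> = of_nat (alpha ?P (Suc n)) / fact n"
      by (simp only: fact_Suc[where 'a=rat]) (simp add: field_simps del: of_nat_Suc)
    also have "\<dots> = (\<Sum>j\<le>n. of_nat (n choose j) * (of_nat (alpha ?P j) * of_nat (alpha ?S (n - j)))) / fact n"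
      unfolding rec by simp
    also have "\<dots> = (\<Sum>j\<le>n. (of_nat (alpha ?P j) / fact j) * (of_nat (alpha ?S (n - j)) / fact (n - j)))"
      unfolding sum_divide_distrib
    proof (rule sum.cong[OF refl])
      fix j assume "j \<in> {..n}"
      then have "j \<le> n" by simp
      then have "(of_nat (n choose j) :: rat) = fact n / (fact j * fact (n - j))"
        by (rule binomial_fact)
      then show "of_nat (n choose j) * (of_nat (alpha ?P j) * of_nat (alpha ?S (n - j))) / fact n =
        (of_nat (alpha ?P j) / fact j) * (of_nat (alpha ?S (n - j)) / (fact (n - j) :: rat))"
        by (simp add: field_simps)
    qed
    also have "\<dots> = (F * B) $ n"
      unfolding fps_mult_nth F_def B_def avoid_egf_def by (simp add: atLeast0AtMost)
    finally show "fps_deriv F $ n = (F * B) $ n" .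
  qed
  moreover have "F $ 0 = 1" unfolding F_def avoid_egf_def using a0 by simp
  ultimately have "F = fps_exp 1 oo fps_integral B 0"
    using exp_comp_ode[of B] by (intro fps_ode_unique[of F B]) auto
  then show ?thesis unfolding F_def B_def by simp
qed

end
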